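(* Let $\lambda_{\max}>1$ and let $F:[0,\lambda_{\max}]\to\mathbb{R}_+$ be continuously differentiable with $F(0)=0$, such that $F(x)<F^\star$ for all $x\in[0,1)$ and $F'(1)>0$. If $F$ is concave-like, then the Dirac measure at $1$ (i.e. $\alpha(\{1\})=1$) is the unique optimal solution of the optimization problem defining $F^\star$. Otherwise, there exist $x_1^\star\in(1,\lambda_{\max}]$, $x_2^\star\in[0,1)$ and $p^\star\in(0,1)$ such that the measure $\alpha$ with $\alpha(\{x_1^\star\})=p^\star$ and $\alpha(\{x_2^\star\})=1-p^\star$ is an optimal solution of that problem.
   Context: $F^\star=\sup\{\mathbb{E}_\alpha[F(X)]:\alpha$ a probability measure on $[0,\lambda_{\max}]$, $X\sim\alpha$, $\mathbb{E}_\alpha[X]\le1\}$. $F$ is called concave-like if for all $x_1,x_2\in[0,\lambda_{\max}]\setminus\{1\}$ and $p\in(0,1)$ with $px_1+(1-p)x_2=1$, we have $F(1)>pF(x_1)+(1-p)F(x_2)$. *)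

theory Defs
  imports "HOL-Probability.Probability"
begin

definition feasible :: "real \<Rightarrow> real measure \<Rightarrow> bool" where
  "feasible lmax M \<longleftrightarrow> prob_space M \<and> sets M = sets borel \<and>
     (AE x in M. x \<in> {0..lmax}) \<and> (\<integral>x. x \<partial>M) \<le> 1"

definition Fstar :: "(real \<Rightarrow> real) \<Rightarrow> real \<Rightarrow> real" where
  "Fstar F lmax = (SUP M \<in> {M. feasible lmax M}. (\<integral>x. F x \<partial>M))"

definition optimal :: "(real \<Rightarrow> real) \<Rightarrow> real \<Rightarrow> real measure \<Rightarrow> bool" where
  "optimal F lmax M \<longleftrightarrow> feasible lmax M \<and> (\<integral>x. F x \<partial>M) = Fstar F lmax"

definition concave_like :: "(real \<Rightarrow> real) \<Rightarrow> real \<Rightarrow> bool" where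
  "concave_like F lmax \<longleftrightarrow>
     (\<forall>x1 \<in> {0..lmax} - {1}. \<forall>x2 \<in> {0..lmax} - {1}. \<forall>p \<in> {0<..<1}.
        p * x1 + (1 - p) * x2 = 1 \<longrightarrow> F 1 > p * F x1 + (1 - p) * F x2)"

end

theory Submission
  imports Defs
begin

lemma mix_lt:
  fixes q u z w :: real
  assumes "0 < q" "q < 1" "u < w" "z \<le> w"
  shows "q*u+(1-q)*z < w"
proof -
  have "q*u < q*w" using assms by (intro mult_strict_left_mono) auto
  moreover have "(1-q)*z \<le> (1-q)*w" using assms by (intro mult_left_mono) auto
  ultimately have "q*u+(1-q)*z < q*w+(1-q)*w" by linarith
  then show ?thesis by (simp add: algebra_simps)
qed

lemma mix_lt2:
  fixes q u z w :: real
  assumes "0 < q" "q < 1" "u \<le> w" "z < w"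
  shows "q*u+(1-q)*z < w"
proof -
  have "q*u \<le> q*w" using assms by (intro mult_left_mono) auto
  moreover have "(1-q)*z < (1-q)*w" using assms by (intro mult_strict_left_mono) auto
  ultimately have "q*u+(1-q)*z < q*w+(1-q)*w" by linarith
  then show ?thesis by (simp add: algebra_simps)
qed

lemma mix_gt:
  fixes q u z w :: real
  assumes "0 < q" "q < 1" "u \<ge> w" "z > w"
  shows "q*u+(1-q)*z > w"
  using mix_lt2[of q "-u" "-w" "-z"] assms by (simp add: algebra_simps)

lemma mix_gt1:
  fixes q u z w :: real
  assumes "0 < q" "q < 1" "u > w" "z \<ge> w"
  shows "q*u+(1-q)*z > w"
  using mix_lt[of q "-u" "-w" "-z"] assms by (simp add: algebra_simps)

lemma maxcase:
  fixes F :: "real \<Rightarrow> real"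
  assumes lm: "lmax > 1"
    and maxV: "\<And>x y q. x \<in> {0..lmax} \<Longrightarrow> y \<in> {0..lmax} \<Longrightarrow> q \<in> {0..1} \<Longrightarrow>
                 q*x+(1-q)*y \<le> 1 \<Longrightarrow> q*F x+(1-q)*F y \<le> V"
    and below: "\<And>x. x \<in> {0..<1} \<Longrightarrow> F x < V"
    and a: "a \<in> {0..lmax}" and b: "b \<in> {0..lmax}" and p: "p \<in> {0..1}"
    and m: "p*a+(1-p)*b \<le> 1" and V: "V = p*F a+(1-p)*F b"
  shows "F 1 = V \<or> (\<exists>x1 x2 q. x1 \<in> {1<..lmax} \<and> x2 \<in> {0..<1} \<and> q \<in> {0<..<1} \<and>
            q*x1+(1-q)*x2 = 1 \<and> q*F x1+(1-q)*F x2 = V)"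
proof -
  have F1: "F 1 \<le> V" using maxV[of 1 1 1] lm by simp
  have gen: "F 1 = V \<or> (\<exists>x1 x2 q. x1 \<in> {1<..lmax} \<and> x2 \<in> {0..<1} \<and> q \<in> {0<..<1} \<and>
            q*x1+(1-q)*x2 = 1 \<and> q*F x1+(1-q)*F x2 = V)"
    if a: "a \<in> {0..lmax}" and b: "b \<in> {0..lmax}" and p: "p \<in> {0..1}"
    and m: "p*a+(1-p)*b \<le> 1" and V: "V = p*F a+(1-p)*F b" and ab: "a \<le> b" for a b p
  proof (cases "p = 1")
    case True
    then have "V = F a" "a \<le> 1" using V m by auto
    then show ?thesis using below[of a] a by (cases "a < 1") auto
  next
    case p1: False
    show ?thesis
    proof (cases "p = 0")
      case True
      then have "V = F b" "b \<le> 1" using V m by auto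
      then show ?thesis using below[of b] b by (cases "b < 1") auto
    next
      case p0: False
      have pp: "0 < p" "p < 1" using p p0 p1 by auto
      show ?thesis
      proof (cases "b \<le> 1")
        case True
        show ?thesis
        proof (cases "a < 1")
          case True
          have "F a < V" using below[of a] a True by auto
          moreover have "F b \<le> V" using maxV[of b b 1] b \<open>b \<le> 1\<close> by auto
          ultimately have "p*F a+(1-p)*F b < V" using pp mix_lt by blast
          then show ?thesis using V by simp
        next
          case False
          then have "a = 1" "b = 1" using ab \<open>b \<le> 1\<close> by auto
          then show ?thesis using V by (simp add: algebra_simps)
        qed
      next
        case False
        then have b1: "b > 1" by simp
        have a1: "a < 1"
        proof (rule ccontr)
          assume "\<not> a < 1"
          then have "a \<ge> 1" by simp
          then have "p*a+(1-p)*b > 1" using mix_gt[OF pp(1) pp(2) _ b1] by simp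
          then show False using m by simp
        qed
        have Fa: "F a < V" using below[of a] a a1 by auto
        have Fb: "F b > F a"
        proof (rule ccontr)
          assume "\<not> F b > F a"
          then have "F b \<le> V" using Fa by linarith
          then have "p*F a+(1-p)*F b < V" using mix_lt[OF pp Fa] by simp
          then show False using V by simp
        qed
        define q where "q = (b - 1)/(b - a)"
        have ba: "b - a > 0" using a1 b1 by simp
        have q01: "0 < q" "q < 1" unfolding q_def using a1 b1 ba by (auto simp: field_simps)
        have "q*(b-a) = b-1" unfolding q_def using ba by simp
        then have qm: "q*a+(1-q)*b = 1" by (simp add: algebra_simps)
        show ?thesis
        proof (cases "p*a+(1-p)*b = 1")
          case True
          have e1: "(1-p)*b+(1-(1-p))*a = 1" using True by (simp add: algebra_simps)
          have e2: "(1-p)*F b+(1-(1-p))*F a = V" using V by (simp add: algebra_simps)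
          have "b \<in> {1<..lmax}" "a \<in> {0..<1}" "1-p \<in> {0<..<1}" using a b a1 b1 pp by auto
          then show ?thesis using e1 e2 by blast
        next
          case False
          then have "p*a+(1-p)*b < 1" using m by simp
          then have "(p - q) * (b - a) > 0" using qm by (simp add: algebra_simps)
          then have pq: "p > q" using ba by (simp add: zero_less_mult_iff)
          have "q*F a+(1-q)*F b \<le> V" using maxV[of a b q] a b q01 qm by auto
          moreover have "q*F a+(1-q)*F b - V = (p - q) * (F b - F a)" using V by (simp add: algebra_simps)
          moreover have "(p - q) * (F b - F a) > 0" using pq Fb by simp
          ultimately show ?thesis by simp
        qed
      qed
    qed
  qed
  show ?thesis
  proof (cases "a \<le> b")
    case True then show ?thesis using gen[OF a b p m V] by blast
  next
    case False
    have e1: "(1-p)*b+(1-(1-p))*a \<le> 1" and e2: "V = (1-p)*F b+(1-(1-p))*F a" using m V by (simp_all add: algebra_simps)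
    have p': "1-p \<in> {0..1}" using p by auto
    have "b \<le> a" using False by simp
    from gen[OF b a p' e1 e2 this] show ?thesis .
  qed
qed

lemma line:
  fixes F :: "real \<Rightarrow> real"
  assumes lm: "lmax > 1"
    and dir: "\<And>x. x \<in> {0..1} \<Longrightarrow> F x \<le> V"
    and mix: "\<And>x y q. x \<in> {0..<1} \<Longrightarrow> y \<in> {1<..lmax} \<Longrightarrow> q \<in> {0<..<1} \<Longrightarrow>
                 q*y+(1-q)*x = 1 \<Longrightarrow> q*F y+(1-q)*F x \<le> V"
    and lip: "\<And>x y. x \<in> {0..lmax} \<Longrightarrow> y \<in> {0..lmax} \<Longrightarrow> \<bar>F x - F y\<bar> \<le> K * \<bar>x - y\<bar>"
  shows "\<exists>l\<ge>0. \<forall>x\<in>{0..lmax}. F x \<le> V + l*(x-1)"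
proof -
  define S where "S = (\<lambda>y. (F y - V)/(y-1)) ` {1<..lmax}"
  have Sne: "S \<noteq> {}" unfolding S_def using lm by auto
  have Sbdd: "bdd_above S" unfolding S_def
  proof (rule bdd_aboveI2)
    fix y assume y: "y \<in> {1<..lmax}"
    have "F y - F 1 \<le> K * (y - 1)" using lip[of y 1] y lm by auto
    moreover have "F 1 \<le> V" using dir[of 1] by simp
    ultimately have "F y - V \<le> K * (y-1)" by simp
    then show "(F y - V)/(y-1) \<le> K" using y by (simp add: divide_le_eq)
  qed
  define l where "l = max 0 (Sup S)"
  have right: "F y \<le> V + l*(y-1)" if y: "y \<in> {1<..lmax}" for y
  proof -
    have "(F y - V)/(y-1) \<le> Sup S" using cSup_upper[OF _ Sbdd] y unfolding S_def by auto
    then have "(F y - V)/(y-1) \<le> l" unfolding l_def by linarith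
    then show ?thesis using y by (simp add: divide_le_eq algebra_simps)
  qed
  have left: "F x \<le> V + l*(x-1)" if x: "x \<in> {0..<1}" for x
  proof (rule ccontr)
    assume H: "\<not> ?thesis"
    have l0: "l > 0"
    proof (rule ccontr)
      assume "\<not> l > 0" then have "l = 0" unfolding l_def by simp
      then show False using H dir[of x] x by simp
    qed
    then have lS: "l = Sup S" unfolding l_def by simp
    define s where "s = (V - F x)/(1-x)"
    have "s < l" unfolding s_def using H x by (simp add: divide_less_eq algebra_simps)
    then obtain z where "z \<in> S" "s < z" using less_cSup_iff[OF Sne Sbdd] lS by auto
    then obtain y where y: "y \<in> {1<..lmax}" and sy: "s < (F y - V)/(y-1)" unfolding S_def by auto
    have Fy: "F y > V + s*(y-1)" using sy y by (simp add: less_divide_eq algebra_simps)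
    have Fx: "F x = V - s*(1-x)" unfolding s_def using x by simp
    define q where "q = (1-x)/(y-x)"
    have yx: "y - x > 0" using x y by simp
    have q01: "0 < q" "q < 1" unfolding q_def using x y yx by (auto simp: field_simps)
    have "q*(y-x) = 1-x" unfolding q_def using yx by simp
    then have qm: "q*y+(1-q)*x = 1" by (simp add: algebra_simps)
    have "q*F y > q*(V + s*(y-1))" using Fy q01 by simp
    then have "q*F y+(1-q)*F x > q*(V + s*(y-1)) + (1-q)*(V - s*(1-x))" using Fx by simp
    also have "q*(V + s*(y-1)) + (1-q)*(V - s*(1-x)) = V + s*(q*y+(1-q)*x - 1)" by (simp add: algebra_simps)
    also have "\<dots> = V" using qm by simp
    finally show False using mix[of x y q] x y q01 qm by auto
  qed
  show ?thesis
  proof (intro exI[of _ l] conjI ballI)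
    show "0 \<le> l" unfolding l_def by simp
    fix x assume x: "x \<in> {0..lmax}"
    show "F x \<le> V + l*(x-1)"
    proof (cases "x < 1")
      case True then show ?thesis using left x by auto
    next
      case False
      show ?thesis
      proof (cases "x = 1")
        case True then show ?thesis using dir[of 1] by simp
      next
        case False then show ?thesis using right x \<open>\<not> x < 1\<close> by auto
      qed
    qed
  qed
qed

definition tp :: "real \<Rightarrow> real \<Rightarrow> real \<Rightarrow> real measure" where
  "tp x y q = distr (measure_pmf (bernoulli_pmf q)) borel (\<lambda>b. if b then x else y)"

lemma tp_basic:
  assumes q: "0 \<le> q" "q \<le> 1"
  shows "prob_space (tp x y q)" "sets (tp x y q) = sets borel"
    "\<And>g. g \<in> borel_measurable borel \<Longrightarrow> (\<integral>z. g z \<partial>tp x y q) = q * g x + (1-q) * g y"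
    "x \<noteq> y \<Longrightarrow> measure (tp x y q) {x} = q"
    "x \<noteq> y \<Longrightarrow> measure (tp x y q) {y} = 1 - q"
    "measure (tp x x q) {x} = 1"
proof -
  have m: "(\<lambda>b. if b then x else y) \<in> measurable (measure_pmf (bernoulli_pmf q)) borel" by simp
  show "prob_space (tp x y q)" unfolding tp_def
    by (rule prob_space.prob_space_distr[OF measure_pmf.prob_space_axioms m])
  show "sets (tp x y q) = sets borel" unfolding tp_def by simp
  show "(\<integral>z. g z \<partial>tp x y q) = q * g x + (1-q) * g y" if "g \<in> borel_measurable borel" for g
    unfolding tp_def using that q by (subst integral_distr[OF m]) (auto simp: algebra_simps)
  show "measure (tp x y q) {x} = q" if "x \<noteq> y"
  proof -
    have "(\<lambda>b. if b then x else y) -` {x} \<inter> space (measure_pmf (bernoulli_pmf q)) = {True}"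
      using that by (auto split: if_splits)
    then show ?thesis unfolding tp_def using q by (simp add: measure_distr[OF m] measure_pmf_single)
  qed
  show "measure (tp x y q) {y} = 1 - q" if "x \<noteq> y"
  proof -
    have "(\<lambda>b. if b then x else y) -` {y} \<inter> space (measure_pmf (bernoulli_pmf q)) = {False}"
      using that by (auto split: if_splits)
    then show ?thesis unfolding tp_def using q by (simp add: measure_distr[OF m] measure_pmf_single)
  qed
  show "measure (tp x x q) {x} = 1"
  proof -
    have "(\<lambda>b. if b then x else x) -` {x} \<inter> space (measure_pmf (bernoulli_pmf q)) = UNIV"
      by auto
    then show ?thesis unfolding tp_def
      by (simp add: measure_return)
  qed
qed

lemma tp_feasible:
  assumes q: "0 \<le> q" "q \<le> 1" and x: "x \<in> {0..lmax}" and y: "y \<in> {0..lmax}"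
    and m: "q*x+(1-q)*y \<le> 1"
  shows "feasible lmax (tp x y q)"
proof -
  have mm: "(\<lambda>b. if b then x else y) \<in> measurable (measure_pmf (bernoulli_pmf q)) borel" by simp
  have "AE z in tp x y q. z \<in> {0..lmax}" unfolding tp_def
    using x y by (subst AE_distr_iff[OF mm]) (auto simp: AE_measure_pmf_iff)
  moreover have "(\<integral>z. z \<partial>tp x y q) \<le> 1" using tp_basic(3)[OF q, of "\<lambda>z. z" x y] m by simp
  ultimately show ?thesis unfolding feasible_def using tp_basic(1,2)[OF q] by auto
qed

lemma ubound:
  fixes F :: "real \<Rightarrow> real"
  assumes Fm: "F \<in> borel_measurable borel" and fe: "feasible lmax M"
    and ln: "\<forall>x\<in>{0..lmax}. F x \<le> V + l*(x-1)" and l0: "l \<ge> 0"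
    and Bd: "\<forall>x\<in>{0..lmax}. \<bar>F x\<bar> \<le> B"
  shows "integrable M F" "integrable M (\<lambda>x. x)"
    "(\<integral>x. V + l*(x-1) \<partial>M) = V + l*((\<integral>x. x \<partial>M) - 1)"
    "(\<integral>x. F x \<partial>M) \<le> V"
proof -
  from fe have ps: "prob_space M" and sM: "sets M = sets borel" and ae: "AE x in M. x \<in> {0..lmax}"
    and mean: "(\<integral>x. x \<partial>M) \<le> 1" by (auto simp: feasible_def)
  interpret prob_space M by fact
  have mF: "F \<in> borel_measurable M" using Fm by (simp add: measurable_cong_sets[OF sM refl])
  have mI: "(\<lambda>x. x) \<in> borel_measurable M" by (simp add: measurable_cong_sets[OF sM refl])
  show iF: "integrable M F"
    by (rule integrable_const_bound[where B=B]) (use ae Bd mF in \<open>auto elim!: AE_mp\<close>)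
  show iI: "integrable M (\<lambda>x. x)"
    by (rule integrable_const_bound[where B=lmax]) (use ae mI in \<open>auto elim!: AE_mp\<close>)
  have iL: "integrable M (\<lambda>x. V + l*(x-1))" using iI by auto
  show eqL: "(\<integral>x. V + l*(x-1) \<partial>M) = V + l*((\<integral>x. x \<partial>M) - 1)"
  proof -
    have "(\<integral>x. V + l*(x-1) \<partial>M) = (\<integral>x. (V - l) + l*x \<partial>M)" by (simp add: algebra_simps)
    also have "\<dots> = (\<integral>x. (V - l) \<partial>M) + (\<integral>x. l*x \<partial>M)"
      by (rule Bochner_Integration.integral_add) (auto simp: iI)
    also have "\<dots> = (V - l) + l * (\<integral>x. x \<partial>M)" by (simp add: prob_space)
    finally show ?thesis by (simp add: algebra_simps)
  qed
  have "(\<integral>x. F x \<partial>M) \<le> (\<integral>x. V + l*(x-1) \<partial>M)"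
    by (rule integral_mono_AE[OF iF iL]) (use ae ln in \<open>auto elim!: AE_mp\<close>)
  also have "\<dots> \<le> V" using eqL l0 mean by (simp add: mult_nonneg_nonpos)
  finally show "(\<integral>x. F x \<partial>M) \<le> V" .
qed

lemma uniq:
  fixes F :: "real \<Rightarrow> real"
  assumes Fm: "F \<in> borel_measurable borel" and fe: "feasible lmax M"
    and ln: "\<forall>x\<in>{0..lmax}. F x \<le> V + l*(x-1)" and l0: "l \<ge> 0"
    and Bd: "\<forall>x\<in>{0..lmax}. \<bar>F x\<bar> \<le> B"
    and opt: "(\<integral>x. F x \<partial>M) = V"
    and below: "\<forall>x\<in>{0..<1}. F x < V"
    and strict: "\<And>x y q. x\<in>{0..<1} \<Longrightarrow> y\<in>{1<..lmax} \<Longrightarrow> q\<in>{0<..<1} \<Longrightarrow>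
                   q*y+(1-q)*x=1 \<Longrightarrow> q*F y+(1-q)*F x < V"
  shows "measure M {1} = 1"
proof -
  note U = ubound[OF Fm fe ln l0 Bd]
  from fe have ps: "prob_space M" and sM: "sets M = sets borel" and ae: "AE x in M. x \<in> {0..lmax}"
    and mean: "(\<integral>x. x \<partial>M) \<le> 1" by (auto simp: feasible_def)
  interpret prob_space M by fact
  have sp: "space M = UNIV" using sets_eq_imp_space_eq[OF sM] by simp
  define L where "L x = V + l*(x-1)" for x
  have iL: "integrable M L" unfolding L_def using U(2) by auto
  have d: "(\<integral>x. L x - F x \<partial>M) = l*((\<integral>x. x \<partial>M) - 1)"
  proof -
    have "(\<integral>x. L x - F x \<partial>M) = (\<integral>x. L x \<partial>M) - (\<integral>x. F x \<partial>M)"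
      by (rule Bochner_Integration.integral_diff[OF iL U(1)])
    then show ?thesis using U(3) opt unfolding L_def by simp
  qed
  have aeLF: "AE x in M. 0 \<le> L x - F x" using ae ln unfolding L_def by (auto elim!: AE_mp)
  have "0 \<le> (\<integral>x. L x - F x \<partial>M)" by (rule integral_nonneg_AE[OF aeLF])
  moreover have "l*((\<integral>x. x \<partial>M) - 1) \<le> 0" using l0 mean by (simp add: mult_nonneg_nonpos)
  ultimately have z: "(\<integral>x. L x - F x \<partial>M) = 0" and lz: "l*((\<integral>x. x \<partial>M) - 1) = 0" using d by auto
  have "AE x in M. L x - F x = 0"
    using integral_nonneg_eq_0_iff_AE[of M "\<lambda>x. L x - F x"] iL U(1) aeLF z by auto
  then have aeEq: "AE x in M. x \<in> {0..lmax} \<and> F x = L x" using ae by (auto elim!: AE_mp)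
  have nullI: "measure M A = 0" if "AE x in M. x \<notin> A" "A \<in> sets borel" for A
    using that AE_iff_null_sets[of A M] sM measure_eq_0_null_sets by auto
  have touch: "\<exists>x\<in>A. x \<in> {0..lmax} \<and> F x = L x" if "measure M A > 0" "A \<in> sets borel" for A
  proof (rule ccontr)
    assume "\<not> ?thesis"
    then have "AE x in M. x \<notin> A" using aeEq by (auto elim!: AE_mp)
    then show False using nullI that by auto
  qed
  have sets: "({..<1} :: real set) \<in> sets M" "({1} :: real set) \<in> sets M" "({1<..} :: real set) \<in> sets M" using sM by auto
  have "measure M ({..<1} \<union> {1}) = measure M {..<1} + measure M {1}"
    using sets sM by (intro finite_measure_Union) auto
  moreover have "measure M (({..<1} \<union> {1}) \<union> {1<..}) = measure M ({..<1} \<union> {1}) + measure M {1<..}"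
    using sets sM by (intro finite_measure_Union) auto
  moreover have "({..<1} \<union> {1}) \<union> {1<..} = (UNIV :: real set)" by auto
  ultimately have part: "measure M {..<1} + measure M {1} + measure M {1<..} = 1"
    using prob_space sp by simp
  show ?thesis
  proof (rule ccontr)
    assume ne: "measure M {1} \<noteq> 1"
    have nn: "measure M {..<1} \<ge> 0" "measure M {1<..} \<ge> 0" by auto
    show False
    proof (cases "measure M {..<1} > 0")
      case A: True
      then obtain x where x: "x < 1" "x \<in> {0..lmax}" "F x = L x" using touch[of "{..<1}"] by auto
      show False
      proof (cases "measure M {1<..} > 0")
        case True
        then obtain y where y: "y > 1" "y \<in> {0..lmax}" "F y = L y" using touch[of "{1<..}"] by auto
        define q where "q = (1-x)/(y-x)"
        have yx: "y - x > 0" using x y by simp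
        have q01: "0 < q" "q < 1" unfolding q_def using x y yx by (auto simp: field_simps)
        have "q*(y-x) = 1-x" unfolding q_def using yx by simp
        then have qm: "q*y+(1-q)*x = 1" by (simp add: algebra_simps)
        have fy: "F y = V + l*(y-1)" and fx: "F x = V + l*(x-1)" using x y unfolding L_def by auto
        have "q*F y+(1-q)*F x = q*(V + l*(y-1))+(1-q)*(V + l*(x-1))" by (simp only: fy fx)
        also have "\<dots> = V + l*(q*y+(1-q)*x - 1)" by (simp add: algebra_simps)
        also have "\<dots> = V" using qm by simp
        finally show False using strict[of x y q] x y q01 qm by auto
      next
        case False
        then have B0: "measure M {1<..} = 0" using nn by simp
        have "AE x in M. x \<notin> {1<..}" using B0 AE_iff_null_sets[of "{1<..}" M] sets
          by (simp add: null_sets_def emeasure_eq_measure)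
        then have ae1: "AE x in M. 0 \<le> 1 - x" by (auto elim!: AE_mp)
        have i1: "integrable M (\<lambda>x. 1 - x)" using U(2) by auto
        have "(\<integral>x. 1 - x \<partial>M) = (\<integral>x. 1 \<partial>M) - (\<integral>x. x \<partial>M)"
          by (rule Bochner_Integration.integral_diff) (auto simp: U(2))
        then have d1: "(\<integral>x. 1 - x \<partial>M) = 1 - (\<integral>x. x \<partial>M)" by (simp add: prob_space)
        have "(\<integral>x. x \<partial>M) < 1"
        proof (rule ccontr)
          assume "\<not> ?thesis"
          then have "(\<integral>x. 1 - x \<partial>M) = 0" using mean d1 by simp
          then have "AE x in M. 1 - x = 0" using integral_nonneg_eq_0_iff_AE[OF i1 ae1] by simp
          then have "AE x in M. x \<notin> {..<1}" by (auto elim!: AE_mp)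
          then show False using nullI[of "{..<1}"] A by auto
        qed
        then have "l = 0" using lz by simp
        then have "F x = V" using x unfolding L_def by simp
        then show False using below[rule_format, of x] x by simp
      qed
    next
      case False
      then have A0: "measure M {..<1} = 0" using nn by simp
      then have "measure M {1<..} \<noteq> 0" using part ne by auto
      then have Bp: "measure M {1<..} > 0" using measure_nonneg[of M "{1<..}"] by linarith
      have "AE x in M. x \<notin> {..<1}" using A0 AE_iff_null_sets[of "{..<1}" M] sets
        by (simp add: null_sets_def emeasure_eq_measure)
      then have ae1: "AE x in M. 0 \<le> x - 1" by (auto elim!: AE_mp)
      have i1: "integrable M (\<lambda>x. x - 1)" using U(2) by auto
      have "(\<integral>x. x - 1 \<partial>M) = (\<integral>x. x \<partial>M) - (\<integral>x. 1 \<partial>M)"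
        by (rule Bochner_Integration.integral_diff) (auto simp: U(2))
      then have "(\<integral>x. x - 1 \<partial>M) \<le> 0" using mean by (simp add: prob_space)
      then have "(\<integral>x. x - 1 \<partial>M) = 0" using integral_nonneg_AE[OF ae1] by simp
      then have "AE x in M. x - 1 = 0" using integral_nonneg_eq_0_iff_AE[OF i1 ae1] by simp
      then have "AE x in M. x \<notin> {1<..}" by (auto elim!: AE_mp)
      then show False using nullI[of "{1<..}"] Bp by auto
    qed
  qed
qed

theorem proposition5p2:
  fixes F F' :: "real \<Rightarrow> real" and lmax :: real
  assumes "lmax > 1"
    and "\<forall>x \<in> {0..lmax}. F x \<ge> 0"
    and "\<forall>x \<in> {0..lmax}. (F has_real_derivative F' x) (at x within {0..lmax})"
    and "continuous_on {0..lmax} F'"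
    and "F 0 = 0"
    and "\<forall>x \<in> {0..<1}. F x < Fstar F lmax"
    and "F' 1 > 0"
  shows "(concave_like F lmax \<longrightarrow>
            (\<exists>M. optimal F lmax M \<and> measure M {1} = 1) \<and>
            (\<forall>M. optimal F lmax M \<longrightarrow> measure M {1} = 1)) \<and>
         (\<not> concave_like F lmax \<longrightarrow>
            (\<exists>x1 x2 p M. x1 \<in> {1<..lmax} \<and> x2 \<in> {0..<1} \<and> p \<in> {0<..<1} \<and>
               optimal F lmax M \<and> measure M {x1} = p \<and> measure M {x2} = 1 - p))"
proof -
  note lm = assms(1) and der = assms(3) and F0 = assms(5) and hyp6 = assms(6)
  have contF: "continuous_on {0..lmax} F" using der by (intro DERIV_continuous_on) auto
  obtain K where K: "\<forall>x\<in>{0..lmax}. \<bar>F' x\<bar> \<le> K"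
    using compact_imp_bounded[OF compact_continuous_image[OF assms(4) compact_Icc]]
    by (auto simp: bounded_iff)
  have lip: "\<bar>F x - F y\<bar> \<le> K * \<bar>x - y\<bar>" if "x \<in> {0..lmax}" "y \<in> {0..lmax}" for x y
    using field_differentiable_bound[of "{0..lmax}" F F' K x y] der K that by auto
  obtain B where Bd: "\<forall>x\<in>{0..lmax}. \<bar>F x\<bar> \<le> B"
    using compact_imp_bounded[OF compact_continuous_image[OF contF compact_Icc]]
    by (auto simp: bounded_iff)
  have fe0: "feasible lmax (tp 0 0 1)" using tp_feasible[of 1 0 lmax 0] lm by auto
  have Fm: "F \<in> borel_measurable borel"
  proof (rule ccontr)
    assume nm: "F \<notin> borel_measurable borel"
    have "(\<integral>x. F x \<partial>M) = 0" if "feasible lmax M" for M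
    proof -
      have "sets M = sets borel" using that by (simp add: feasible_def)
      then have "F \<notin> borel_measurable M" using nm measurable_cong_sets[of M borel] by auto
      then show ?thesis by (intro not_integrable_integral_eq) auto
    qed
    then have "(SUP M \<in> {M. feasible lmax M}. (\<integral>x. F x \<partial>M)) = (SUP M \<in> {M. feasible lmax M}. (0::real))"
      by (intro SUP_cong) auto
    also have "\<dots> = 0" using fe0 by (intro cSUP_const) auto
    finally have "Fstar F lmax = 0" unfolding Fstar_def .
    then show False using hyp6[rule_format, of 0] F0 lm by simp
  qed
  define G where "G x = F (max 0 (min lmax x))" for x
  have GF: "G x = F x" if "x \<in> {0..lmax}" for x using that unfolding G_def by auto
  have contG: "continuous_on UNIV G" unfolding G_def
    by (rule continuous_on_compose2[OF contF]) (use lm in \<open>auto intro!: continuous_intros\<close>)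
  have contG2: "continuous_on S (\<lambda>z. G (f z))" if "continuous_on S f" for S and f :: "real\<times>real\<times>real \<Rightarrow> real"
    by (rule continuous_on_compose2[OF contG that]) auto
  define T where "T = ({0..lmax} \<times> {0..lmax} \<times> {0..1}) \<inter> {z::real\<times>real\<times>real. snd (snd z) * fst z + (1 - snd (snd z)) * fst (snd z) \<le> 1}"
  have cT: "compact T" unfolding T_def
    by (intro compact_Int_closed compact_Times compact_Icc closed_Collect_le continuous_intros)
  have neT: "(1,1,1) \<in> T" unfolding T_def using lm by auto
  obtain z where zT: "z \<in> T" and zmax: "\<forall>w\<in>T. (\<lambda>w. snd (snd w) * G (fst w) + (1 - snd (snd w)) * G (fst (snd w))) w
       \<le> (\<lambda>w. snd (snd w) * G (fst w) + (1 - snd (snd w)) * G (fst (snd w))) z"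
  proof -
    have "\<exists>z\<in>T. \<forall>w\<in>T. (\<lambda>w. snd (snd w) * G (fst w) + (1 - snd (snd w)) * G (fst (snd w))) w
       \<le> (\<lambda>w. snd (snd w) * G (fst w) + (1 - snd (snd w)) * G (fst (snd w))) z"
      by (rule continuous_attains_sup[OF cT]) (use neT in \<open>auto intro!: continuous_intros contG2\<close>)
    then show ?thesis using that by blast
  qed
  obtain a b p where z: "z = (a,b,p)" by (cases z) auto
  have a: "a \<in> {0..lmax}" and b: "b \<in> {0..lmax}" and p: "p \<in> {0..1}" and m: "p*a+(1-p)*b \<le> 1"
    using zT z unfolding T_def by auto
  define V where "V = p*F a+(1-p)*F b"
  have maxV: "q*F x+(1-q)*F y \<le> V" if "x \<in> {0..lmax}" "y \<in> {0..lmax}" "q \<in> {0..1}" "q*x+(1-q)*y \<le> 1" for x y q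
    using zmax[rule_format, of "(x,y,q)"] that a b unfolding T_def z V_def by (auto simp: GF)
  obtain l where l0: "l \<ge> 0" and ln: "\<forall>x\<in>{0..lmax}. F x \<le> V + l*(x-1)"
  proof -
    have "\<exists>l\<ge>0. \<forall>x\<in>{0..lmax}. F x \<le> V + l*(x-1)"
    proof (rule line[OF lm _ _ lip])
      show "F x \<le> V" if "x \<in> {0..1}" for x using maxV[of x x 1] that lm by auto
      show "q*F y+(1-q)*F x \<le> V" if "x \<in> {0..<1}" "y \<in> {1<..lmax}" "q \<in> {0<..<1}" "q*y+(1-q)*x = 1" for x y q
        using maxV[of y x q] that by auto
    qed auto
    then show ?thesis using that by blast
  qed
  have feab: "feasible lmax (tp a b p)" using tp_feasible p a b m by auto
  have intab: "(\<integral>x. F x \<partial>tp a b p) = V" using tp_basic(3)[of p F a b] p Fm unfolding V_def by auto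
  have FsV: "Fstar F lmax = V" unfolding Fstar_def
  proof (rule cSup_eq_maximum)
    show "V \<in> (\<lambda>M. \<integral>x. F x \<partial>M) ` {M. feasible lmax M}" using feab intab by force
    show "y \<le> V" if "y \<in> (\<lambda>M. \<integral>x. F x \<partial>M) ` {M. feasible lmax M}" for y
      using that ubound(4)[OF Fm _ ln l0 Bd] by auto
  qed
  have below: "F x < V" if "x \<in> {0..<1}" for x using hyp6 that FsV by auto
  have F1: "F 1 \<le> V" using maxV[of 1 1 1] lm by auto
  have mc: "F 1 = V \<or> (\<exists>x1 x2 q. x1 \<in> {1<..lmax} \<and> x2 \<in> {0..<1} \<and> q \<in> {0<..<1} \<and>
            q*x1+(1-q)*x2 = 1 \<and> q*F x1+(1-q)*F x2 = V)"
    by (rule maxcase[OF lm _ below a b p m V_def]) (rule maxV; assumption)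
  have optI: "optimal F lmax (tp x1 x2 q)" if "x1 \<in> {0..lmax}" "x2 \<in> {0..lmax}" "q \<in> {0..1}"
     "q*x1+(1-q)*x2 \<le> 1" "q*F x1+(1-q)*F x2 = V" for x1 x2 q
    unfolding optimal_def FsV using tp_feasible[of q x1 lmax x2] tp_basic(3)[of q F x1 x2] that Fm by auto
  have straddle: "\<exists>x1 x2 p M. x1 \<in> {1<..lmax} \<and> x2 \<in> {0..<1} \<and> p \<in> {0<..<1} \<and>
               optimal F lmax M \<and> measure M {x1} = p \<and> measure M {x2} = 1 - p"
    if "x1 \<in> {1<..lmax}" "x2 \<in> {0..<1}" "q \<in> {0<..<1}" "q*x1+(1-q)*x2 = 1" "q*F x1+(1-q)*F x2 = V" for x1 x2 q
    apply (rule exI[of _ x1], rule exI[of _ x2], rule exI[of _ q], rule exI[of _ "tp x1 x2 q"])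
    using that optI[of x1 x2 q] tp_basic(4,5)[of q x1 x2] lm by auto
  show ?thesis
  proof (intro conjI impI)
    assume cl: "concave_like F lmax"
    have strict: "q*F y+(1-q)*F x < F 1" if "x\<in>{0..<1}" "y\<in>{1<..lmax}" "q\<in>{0<..<1}" "q*y+(1-q)*x=1" for x y q
      using cl that unfolding concave_like_def by auto
    have FV: "F 1 = V" using mc strict F1 by fastforce
    show "\<exists>M. optimal F lmax M \<and> measure M {1} = 1"
      using optI[of 1 1 1] tp_basic(6)[of 1 1] lm FV by auto
    show "\<forall>M. optimal F lmax M \<longrightarrow> measure M {1} = 1"
    proof (intro allI impI)
      fix M assume "optimal F lmax M"
      then have fe: "feasible lmax M" and opt: "(\<integral>x. F x \<partial>M) = V" unfolding optimal_def FsV by auto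
      show "measure M {1} = 1"
        by (rule uniq[OF Fm fe ln l0 Bd opt]) (use below strict FV in auto)
    qed
  next
    assume ncl: "\<not> concave_like F lmax"
    show "\<exists>x1 x2 p M. x1 \<in> {1<..lmax} \<and> x2 \<in> {0..<1} \<and> p \<in> {0<..<1} \<and>
               optimal F lmax M \<and> measure M {x1} = p \<and> measure M {x2} = 1 - p"
    proof (cases "F 1 = V")
      case False then show ?thesis using mc straddle by blast
    next
      case FV: True
      from ncl obtain x1 x2 q where x1: "x1 \<in> {0..lmax}" "x1 \<noteq> 1" and x2: "x2 \<in> {0..lmax}" "x2 \<noteq> 1"
        and q: "q \<in> {0<..<1}" and qm: "q*x1+(1-q)*x2 = 1" and le: "F 1 \<le> q*F x1+(1-q)*F x2"
      proof -
        have "\<exists>x1\<in>{0..lmax}-{1}. \<exists>x2\<in>{0..lmax}-{1}. \<exists>q\<in>{0<..<1}.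
            q*x1+(1-q)*x2 = 1 \<and> \<not> F 1 > q*F x1+(1-q)*F x2"
          using ncl unfolding concave_like_def by blast
        then obtain y1 y2 r where h: "y1 \<in> {0..lmax}-{1}" "y2 \<in> {0..lmax}-{1}" "r \<in> {0<..<1}"
           "r*y1+(1-r)*y2 = 1" "\<not> F 1 > r*F y1+(1-r)*F y2" by blast
        show ?thesis
        proof (rule that[of y1 y2 r])
          show "y1 \<in> {0..lmax}" "y1 \<noteq> 1" using h(1) by simp_all
          show "y2 \<in> {0..lmax}" "y2 \<noteq> 1" using h(2) by simp_all
          show "r \<in> {0<..<1}" "r*y1+(1-r)*y2 = 1" using h(3,4) by simp_all
          show "F 1 \<le> r*F y1+(1-r)*F y2" using h(5) by simp
        qed
      qed
      have eq: "q*F x1+(1-q)*F x2 = V" using le FV maxV[of x1 x2 q] x1 x2 q qm by auto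
      show ?thesis
      proof (cases "x1 > 1")
        case True
        have "x2 < 1"
        proof (rule ccontr)
          assume "\<not> x2 < 1"
          then have h2: "x2 \<ge> 1" by simp
          have q0: "0 < q" "q < 1" using q by auto
          have "q*x1+(1-q)*x2 > 1" using mix_gt1[OF q0 True h2] .
          then show False using qm by simp
        qed
        then show ?thesis using straddle[of x1 x2 q] True x1 x2 q qm eq by auto
      next
        case False
        then have x1l: "x1 < 1" using x1 by auto
        have "x2 > 1"
        proof (rule ccontr)
          assume "\<not> x2 > 1"
          then have h2: "x2 \<le> 1" by simp
          have q0: "0 < q" "q < 1" using q by auto
          have "q*x1+(1-q)*x2 < 1" using mix_lt[OF q0 x1l h2] .
          then show False using qm by simp
        qed
        then show ?thesis using straddle[of x2 x1 "1-q"] x1l x1 x2 q qm eq by (auto simp: algebra_simps)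
      qed
    qed
  qed
qed

end
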